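(* For all positive real numbers $a\neq b$ and all $t\in(0,1)$, \[ a^{1-t}b^t\le \frac{1}{e}\big((1-t)a+tb\big)^{\frac{(1-2t)(tb+(1-t)a)}{t(1-t)(b-a)}}\left(\frac{b^{\frac{tb}{1-t}}}{a^{\frac{(1-t)a}{t}}}\right)^{\frac{1}{b-a}}\le (1-t)a+tb. \] *)

theory Defs
  imports Complex_Main
begin
end

theory Submission
  imports Defs "HOL-Analysis.Convex"
begin

lemma wln: fixes x y t :: real
  assumes "x > 0" "y > 0" "0 \<le> t" "t \<le> 1"
  shows "(1-t) * ln x + t * ln y \<le> ln ((1-t)*x + t*y)"
  using assms ln_concave by (simp add: concave_on_iff)

lemma L1: fixes s :: real assumes "s \<ge> 1" shows "2*(s-1) \<le> (s+1) * ln s"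
proof -
  let ?g = "\<lambda>s::real. (s+1) * ln s - 2*(s-1)"
  have "?g 1 \<le> ?g s"
  proof (rule DERIV_nonneg_imp_nondecreasing[OF assms])
    fix x :: real assume x: "1 \<le> x" "x \<le> s"
    have "DERIV ?g x :> (ln x + (x+1)/x - 2)"
      using x by (auto intro!: derivative_eq_intros simp: field_simps)
    moreover have "ln x + (x+1)/x - 2 \<ge> 0"
    proof -
      have "ln (1/x) \<le> 1/x - 1" using ln_le_minus_one[of "1/x"] x by simp
      hence "ln x \<ge> 1 - 1/x" using x by (simp add: ln_div)
      hence "ln x + (x+1)/x - 2 \<ge> 1 - 1/x + (x+1)/x - 2" by linarith
      moreover have "1 - 1/x + (x+1)/x - 2 = 0" using x by (simp add: field_simps)
      ultimately show ?thesis by linarith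
    qed
    ultimately show "\<exists>y. DERIV ?g x :> y \<and> y \<ge> 0" by blast
  qed
  thus ?thesis by simp
qed

lemma hd: fixes z :: real assumes "z \<ge> 1"
  shows "inverse ((1+z)/(2*z)) * ((2*z - (1+z)*2)/(2*z)^2) + (1*(z+1) - (z-1)*1)/(z+1)^2 = (z-1)/(z*(z+1)^2)"
proof -
  have z: "z > 0" "z + 1 > 0" using assms by auto
  have "inverse ((1+z)/(2*z)) * ((2*z - (1+z)*2)/(2*z)^2) = -1/(z*(z+1))"
    using z by (simp add: field_simps power2_eq_square)
  moreover have "(1*(z+1) - (z-1)*1)/(z+1)^2 = 2/(z+1)^2" by simp
  moreover have "-1/(z*w) + 2/w^2 = (z-1)/(z*w^2)" if "w = z + 1" "w > 0" for w
  proof -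
    have "-1/(z*w) + 2/w^2 = (2*z - w)/(z*w^2)" using z that(2) by (simp add: field_simps power2_eq_square)
    thus ?thesis using that(1) by simp
  qed
  ultimately show ?thesis using z by simp
qed

lemma L2: fixes s :: real assumes "s \<ge> 1"
  shows "s * ln s - (s-1) \<le> (s-1) * ln ((1+s)/2)"
proof -
  let ?h = "\<lambda>s::real. ln ((1+s)/(2*s)) + (s-1)/(s+1)"
  have h: "?h x \<ge> 0" if x: "x \<ge> 1" for x
  proof -
    have "?h 1 \<le> ?h x"
    proof (rule DERIV_nonneg_imp_nondecreasing[OF x])
      fix z :: real assume z: "1 \<le> z" "z \<le> x"
      have "DERIV ?h z :> (inverse ((1+z)/(2*z)) * ((2*z - (1+z)*2)/(2*z)^2) + (1*(z+1) - (z-1)*1)/(z+1)^2)"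
        using z by (auto intro!: derivative_eq_intros simp: power2_eq_square)
      moreover have "inverse ((1+z)/(2*z)) * ((2*z - (1+z)*2)/(2*z)^2) + (1*(z+1) - (z-1)*1)/(z+1)^2 = (z-1)/(z*(z+1)^2)"
        using hd z(1) by blast
      ultimately have "DERIV ?h z :> (z-1)/(z*(z+1)^2)" by simp
      moreover have "(z-1)/(z*(z+1)^2) \<ge> 0" using z by simp
      ultimately show "\<exists>y. DERIV ?h z :> y \<and> y \<ge> 0" by blast
    qed
    thus ?thesis by simp
  qed
  let ?f = "\<lambda>s::real. (s-1) * ln ((1+s)/2) - s * ln s + (s-1)"
  have "?f 1 \<le> ?f s"
  proof (rule DERIV_nonneg_imp_nondecreasing[OF assms])
    fix x :: real assume x: "1 \<le> x" "x \<le> s"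
    have "DERIV ?f x :> (1 * ln ((1+x)/2) + (x-1) * (inverse ((1+x)/2) * (1/2)) - (1 * ln x + x * inverse x) + 1)"
      using x by (auto intro!: derivative_eq_intros)
    moreover have "(x-1) * (inverse ((1+x)/2) * (1/2)) = (x-1)/(1+x)" using x by (simp add: field_simps)
    moreover have "x * inverse x = 1" using x by simp
    moreover have "ln ((1+x)/2) - ln x = ln ((1+x)/(2*x))" using x by (simp add: ln_div ln_mult)
    ultimately have "DERIV ?f x :> ?h x" by (simp add: algebra_simps)
    thus "\<exists>y. DERIV ?f x :> y \<and> y \<ge> 0" using h[OF x(1)] by auto
  qed
  thus ?thesis by simp
qed

lemma keyalg: fixes a b t s d m la lb lm :: real
  assumes t0: "t \<noteq> 0" and t1: "s \<noteq> 0" and ba: "d \<noteq> 0" and st: "s + t = 1"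
  shows "s * ((m * lm - a * la) / (t * d) - 1)
         + t * ((b * lb - m * lm) / (s * d) - 1)
   = -1 + ((s - t) * m / (t * s * d)) * lm
      + (1 / d) * (t * b / s * lb - s * a / t * la)"
proof -
  have s1: "s = 1 - t" using st by simp
  have "s * ((m * lm - a * la) / (t * d) - 1)
         + t * ((b * lb - m * lm) / (s * d) - 1) = (s*s*(m * lm - a * la) + t*t*(b * lb - m * lm))/(t*s*d) - (s+t)"
    using t0 t1 ba by (simp add: field_simps)
  also have "\<dots> = -1 + ((s - t) * m / (t * s * d)) * lm
      + (1 / d) * (t * b / s * lb - s * a / t * la)"
    using t0 t1 ba by (simp add: field_simps) (simp add: s1 algebra_simps)
  finally show ?thesis .
qed

definition LI :: "real \<Rightarrow> real \<Rightarrow> real" where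
  "LI x y = (y * ln y - x * ln x) / (y - x) - 1"

lemma LI_sym: "LI x y = LI y x"
  unfolding LI_def by (cases "x = y") (auto simp: field_simps)

lemma LI_bounds_lt: fixes x y :: real assumes "0 < x" "x < y"
  shows "(ln x + ln y)/2 \<le> LI x y \<and> LI x y \<le> ln ((x+y)/2)"
proof -
  define s where "s = y / x"
  have s1: "s > 1" using assms by (simp add: s_def)
  have y: "y = x * s" using assms by (simp add: s_def)
  have lny: "ln y = ln x + ln s" using assms s1 y by (simp add: ln_mult)
  have LIe: "LI x y = ln x + s * ln s / (s - 1) - 1"
    unfolding LI_def lny using assms s1 y by (simp add: field_simps)
  have lnm: "ln ((x+y)/2) = ln x + ln ((1+s)/2)"
  proof -
    have e: "(x+y)/2 = x * ((1+s)/2)" using y by (simp add: algebra_simps)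
    have "ln (x * ((1+s)/2)) = ln x + ln ((1+s)/2)" by (rule ln_mult_pos) (use assms s1 in auto)
    thus ?thesis unfolding e .
  qed
  have A: "ln s / 2 \<le> s * ln s / (s - 1) - 1"
    using L1[of s] s1 by (simp add: field_simps)
  have B: "s * ln s / (s - 1) - 1 \<le> ln ((1+s)/2)"
    using L2[of s] s1 by (simp add: field_simps)
  show ?thesis using A B LIe lnm lny by simp
qed

lemma LI_bounds: fixes x y :: real assumes "0 < x" "0 < y" "x \<noteq> y"
  shows "(ln x + ln y)/2 \<le> LI x y \<and> LI x y \<le> ln ((x+y)/2)"
proof (cases "x < y")
  case True thus ?thesis using LI_bounds_lt assms by blast
next
  case False hence "y < x" using assms by simp
  thus ?thesis using LI_bounds_lt[of y x] assms LI_sym[of x y] by (simp add: add.commute)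
qed

theorem theorem3p1:
  fixes a b t :: real
  assumes "a > 0" and "b > 0" and "a \<noteq> b" and "0 < t" and "t < 1"
  shows "a powr (1 - t) * b powr t
           \<le> (1 / exp 1) * ((1 - t) * a + t * b) powr
                 (((1 - 2 * t) * (t * b + (1 - t) * a)) / (t * (1 - t) * (b - a)))
               * (b powr (t * b / (1 - t)) / a powr ((1 - t) * a / t)) powr (1 / (b - a))
         \<and> (1 / exp 1) * ((1 - t) * a + t * b) powr
                 (((1 - 2 * t) * (t * b + (1 - t) * a)) / (t * (1 - t) * (b - a)))
               * (b powr (t * b / (1 - t)) / a powr ((1 - t) * a / t)) powr (1 / (b - a))
           \<le> (1 - t) * a + t * b"
proof -
  define m where "m = (1 - t) * a + t * b"
  define M where "M = (1 / exp 1) * ((1 - t) * a + t * b) powr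
                 (((1 - 2 * t) * (t * b + (1 - t) * a)) / (t * (1 - t) * (b - a)))
               * (b powr (t * b / (1 - t)) / a powr ((1 - t) * a / t)) powr (1 / (b - a))"
  have m0: "m > 0"
  proof -
    have "(1 - t) * a > 0" "t * b > 0" using assms by simp_all
    thus ?thesis unfolding m_def by linarith
  qed
  have d1: "m - a = t * (b - a)" unfolding m_def by algebra
  have d2: "b - m = (1 - t) * (b - a)" unfolding m_def by algebra
  have ma: "m \<noteq> a" using d1 assms by auto
  have mb: "m \<noteq> b" using d2 assms by auto
  have M0: "M > 0" using assms m0 unfolding M_def m_def by simp
  have E: "t * b + (1 - t) * a = m" by (simp add: m_def)
  have ppos: "b powr (t * b / (1 - t)) / a powr ((1 - t) * a / t) > 0" using assms by simp
  have Meq: "M = (1 / exp 1) * m powr ((1 - 2 * t) * m / (t * (1 - t) * (b - a)))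
      * (b powr (t * b / (1 - t)) / a powr ((1 - t) * a / t)) powr (1 / (b - a))"
    unfolding M_def m_def[symmetric] E ..
  have "ln M = ln (1 / exp 1) + ln (m powr ((1 - 2 * t) * m / (t * (1 - t) * (b - a))))
      + ln ((b powr (t * b / (1 - t)) / a powr ((1 - t) * a / t)) powr (1 / (b - a)))"
  proof -
    have p1: "(1 / exp 1) * m powr ((1 - 2 * t) * m / (t * (1 - t) * (b - a))) > 0" using m0 by simp
    have p2: "(b powr (t * b / (1 - t)) / a powr ((1 - t) * a / t)) powr (1 / (b - a)) > 0" using ppos assms by simp
    have p3: "(1 / exp 1) > (0::real)" by simp
    have p4: "m powr ((1 - 2 * t) * m / (t * (1 - t) * (b - a))) > 0" using m0 by simp
    show ?thesis unfolding Meq ln_mult_pos[OF p1 p2] ln_mult_pos[OF p3 p4] ..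
  qed
  also have "ln (1 / exp 1) = (-1::real)" by (subst ln_divide_pos) auto
  also have "ln ((b powr (t * b / (1 - t)) / a powr ((1 - t) * a / t)) powr (1 / (b - a)))
     = (1 / (b - a)) * (t * b / (1 - t) * ln b - (1 - t) * a / t * ln a)"
    using assms by (simp add: ln_div)
  finally have lnM: "ln M = -1 + ((1 - 2 * t) * m / (t * (1 - t) * (b - a))) * ln m
      + (1 / (b - a)) * (t * b / (1 - t) * ln b - (1 - t) * a / t * ln a)"
    by simp
  have key: "ln M = (1 - t) * LI a m + t * LI m b"
  proof -
    have "(1 - t) * LI a m + t * LI m b = -1 + (((1 - t) - t) * m / (t * (1 - t) * (b - a))) * ln m
      + (1 / (b - a)) * (t * b / (1 - t) * ln b - (1 - t) * a / t * ln a)"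
      unfolding LI_def d1 d2 by (rule keyalg) (use assms in auto)
    also have "(1 - t) - t = 1 - 2 * t" by simp
    finally show ?thesis using lnM by simp
  qed
  have B1: "(ln a + ln m)/2 \<le> LI a m \<and> LI a m \<le> ln ((a+m)/2)"
    using LI_bounds[of a m] assms m0 ma by auto
  have B2: "(ln m + ln b)/2 \<le> LI m b \<and> LI m b \<le> ln ((m+b)/2)"
    using LI_bounds[of m b] assms m0 mb by auto
  have c1: "(1-t) * ln a + t * ln b \<le> ln m"
    using wln[of a b t] assms unfolding m_def by simp
  have c2: "(1-t) * ln ((a+m)/2) + t * ln ((m+b)/2) \<le> ln m"
  proof -
    have "(1-t) * ln ((a+m)/2) + t * ln ((m+b)/2) \<le> ln ((1-t)*((a+m)/2) + t*((m+b)/2))"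
      using wln[of "(a+m)/2" "(m+b)/2" t] assms m0 by simp
    also have "(1-t)*((a+m)/2) + t*((m+b)/2) = ((1-t)*a + t*b + m)/2" by (simp add: field_simps)
    also have "\<dots> = m" unfolding m_def by simp
    finally show ?thesis .
  qed
  have low: "(1-t) * ln a + t * ln b \<le> ln M"
  proof -
    have "(1-t) * ((ln a + ln m)/2) + t * ((ln m + ln b)/2) \<le> ln M"
      unfolding key using B1 B2 assms
      by (intro add_mono mult_left_mono) auto
    moreover have "(1-t)*((ln a+ln m)/2) + t*((ln m+ln b)/2) = ((1-t)*ln a + t*ln b + ln m)/2"
      by (simp add: field_simps)
    ultimately have "((1-t)*ln a + t*ln b + ln m)/2 \<le> ln M" by simp
    moreover have "(1-t)*ln a + t*ln b \<le> ((1-t)*ln a + t*ln b + ln m)/2" using c1 by (simp add: field_simps)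
    ultimately show ?thesis by (rule order_trans[rotated])
  qed
  have up: "ln M \<le> ln m"
  proof -
    have "ln M \<le> (1-t) * ln ((a+m)/2) + t * ln ((m+b)/2)"
      unfolding key using B1 B2 assms
      by (intro add_mono mult_left_mono) auto
    thus ?thesis using c2 by linarith
  qed
  have G0: "a powr (1 - t) * b powr t > 0" using assms by simp
  have "ln (a powr (1 - t) * b powr t) = (1-t) * ln a + t * ln b"
    using assms by (simp add: ln_mult_pos)
  hence "ln (a powr (1 - t) * b powr t) \<le> ln M" using low by simp
  hence "a powr (1 - t) * b powr t \<le> M" using ln_le_cancel_iff[OF G0 M0] by simp
  moreover have "M \<le> m" using up M0 m0 by simp
  ultimately show ?thesis unfolding M_def m_def by blast
qed

end
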